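(* Let $\mathcal{G}(t)$ be a matrix-weighted switching network satisfying Assumption 1 (described in the context), and let $L^k$ denote its matrix-valued Laplacian on $[t_k,t_{k+1})$. For integers $0\le k'<k''$, let $\widetilde{L}_{[t_{k'},t_{k''})}=\frac{1}{t_{k''}-t_{k'}}\int_{t_{k'}}^{t_{k''}}L(t)\,dt$ be the matrix-valued Laplacian of the integral network over $[t_{k'},t_{k''})$. Then $$\mathrm{null}(\widetilde{L}_{[t_{k'},t_{k''})})=\bigcap_{i=1}^{k''-k'}\mathrm{null}(L^{k'+i-1}).$$
   Context: A matrix-weighted switching network $\mathcal{G}(t)=(\mathcal{V},\mathcal{E}(t),A(t))$ has node set $\mathcal{V}=\{1,\dots,n\}$, $n>1$; each edge $(i,j)\in\mathcal{E}(t)$ carries a symmetric weight $A_{ij}(t)\in\mathbb{R}^{d\times d}$ which is either positive (semi-)definite or negative (semi-)definite, with $A_{ij}=A_{ji}$, $A_{ii}=0$, $A_{ij}(t)=0$ if $(i,j)\notin\mathcal{E}(t)$; standing assumption: for each pair $(i,j)$ the weight $A_{ij}(t)$ has the same sign type (PSD for all $t$, or NSD for all $t$). Set $|A_{ij}|=A_{ij}$ if $A_{ij}\succeq0$ and $-A_{ij}$ if $A_{ij}\preceq0$. With $A=[A_{ij}]\in\mathbb{R}^{dn\times dn}$ and $D=\mathrm{diag}(D_1,\dots,D_n)$, $D_i=\sum_{j:(i,j)\in\mathcal{E}}|A_{ij}|$, the matrix-valued Laplacian is $L=D-A$. Assumption 1: there is a sequence $\{t_k\}_{k\in\mathbb{N}}$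 with $t_0=0$, $t_k\to\infty$, $t_{k+1}-t_k\ge\alpha>0$, and $\mathcal{G}(t)$ is constant on each $[t_k,t_{k+1})$. The integral network over $[t_1,t_2)$ has weights $\widetilde{A}=\frac{1}{t_2-t_1}\int_{t_1}^{t_2}A(t)dt$, degree $\widetilde{D}=\frac{1}{t_2-t_1}\int_{t_1}^{t_2}D(t)dt$, and Laplacian $\widetilde{L}=\widetilde{D}-\widetilde{A}$. *)

theory Defs
  imports "HOL-Analysis.Analysis"
begin

text \<open>Nodes are indexed by a finite type 'n, the weight dimension by a finite type 'd.
  A matrix-weighted network is given by its block weight function
  W :: 'n => 'n => real^'d^'d (W i j = A_ij).\<close>

definition psd :: "real^'d^'d \<Rightarrow> bool" where
  "psd M \<longleftrightarrow> transpose M = M \<and> (\<forall>x. 0 \<le> x \<bullet> (M *v x))"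

definition nsd :: "real^'d^'d \<Rightarrow> bool" where
  "nsd M \<longleftrightarrow> transpose M = M \<and> (\<forall>x. x \<bullet> (M *v x) \<le> 0)"

definition mabs :: "real^'d^'d \<Rightarrow> real^'d^'d" where
  "mabs M = (if psd M then M else - M)"

text \<open>Degree block D_i = sum_j |A_ij| (non-edges have zero weight, contributing 0).\<close>
definition degree :: "('n::finite \<Rightarrow> 'n \<Rightarrow> real^'d^'d) \<Rightarrow> 'n \<Rightarrow> real^'d^'d" where
  "degree W i = (\<Sum>j\<in>UNIV. mabs (W i j))"

definition laplacian :: "('n::finite \<Rightarrow> 'n \<Rightarrow> real^'d^'d) \<Rightarrow> 'n \<Rightarrow> 'n \<Rightarrow> real^'d^'d" where
  "laplacian W i j = (if i = j then degree W i else 0) - W i j"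

definition block_null :: "('n::finite \<Rightarrow> 'n \<Rightarrow> real^'d^'d) \<Rightarrow> ('n \<Rightarrow> real^'d) set" where
  "block_null L = {x. \<forall>i. (\<Sum>j\<in>UNIV. L i j *v x j) = 0}"

definition integral_laplacian ::
  "(real \<Rightarrow> 'n::finite \<Rightarrow> 'n \<Rightarrow> real^'d^'d) \<Rightarrow> real \<Rightarrow> real \<Rightarrow> 'n \<Rightarrow> 'n \<Rightarrow> real^'d^'d" where
  "integral_laplacian A a b i j = (1 / (b - a)) *\<^sub>R integral {a..b} (\<lambda>t. laplacian (A t) i j)"

end

theory Submission
  imports Defs
begin

lemma inner_sym_mat:
  fixes M :: "real^'d^'d"
  assumes "transpose M = M"
  shows "z \<bullet> (M *v y) = y \<bullet> (M *v z)"
proof -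
  have "z \<bullet> (M *v y) = (z v* M) \<bullet> y" by (simp add: dot_lmul_matrix)
  also have "z v* M = M *v z"
    by (metis assms transpose_matrix_vector)
  finally show ?thesis by (simp add: inner_commute)
qed

lemma psd_null:
  fixes M :: "real^'d^'d"
  assumes "transpose M = M" "\<And>x. 0 \<le> x \<bullet> (M *v x)" "y \<bullet> (M *v y) = 0"
  shows "M *v y = 0"
proof -
  define z where "z = M *v y"
  have sy: "y \<bullet> (M *v z) = z \<bullet> z"
    using inner_sym_mat[OF assms(1), of z y] z_def by simp
  have q: "0 \<le> - 2 * t * (z \<bullet> z) + t^2 * (z \<bullet> (M *v z))" for t :: real
  proof -
    have "0 \<le> (y - t *\<^sub>R z) \<bullet> (M *v (y - t *\<^sub>R z))" by (rule assms(2))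
    also have "\<dots> = y \<bullet> (M *v y) - t * (y \<bullet> (M *v z)) - t * (z \<bullet> (M *v y))
        + t^2 * (z \<bullet> (M *v z))"
      by (simp add: matrix_vector_mult_diff_distrib matrix_vector_mult_scaleR
          inner_diff_left inner_diff_right algebra_simps power2_eq_square)
    finally show ?thesis using assms(3) sy z_def by (simp add: algebra_simps)
  qed
  show ?thesis
  proof (rule ccontr)
    assume "M *v y \<noteq> 0"
    then have zz: "z \<bullet> z > 0" using z_def by simp
    define c where "c = z \<bullet> (M *v z)"
    have c0: "c \<ge> 0" using assms(2) c_def by simp
    define t where "t = (z \<bullet> z) / (c + 1)"
    have tpos: "t > 0" using zz c0 t_def by simp
    have "t * c < 2 * (z \<bullet> z)"
    proof -
      have "t * c \<le> t * (c + 1)" using tpos by simp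
      also have "\<dots> = z \<bullet> z" using c0 t_def by simp
      finally have "t * c \<le> z \<bullet> z" .
      then show ?thesis using zz by linarith
    qed
    then have "t^2 * c < 2 * t * (z \<bullet> z)" using tpos
      by (simp add: power2_eq_square)
    then show False using q[of t] c_def by simp
  qed
qed

lemma sum_mat_vec:
  fixes f :: "'a \<Rightarrow> real^'d^'e"
  shows "finite S \<Longrightarrow> (sum f S) *v x = (\<Sum>m\<in>S. f m *v x)"
  by (induction S rule: finite_induct) (auto simp: matrix_vector_mult_add_rdistrib)

definition sg :: "real^'d^'d \<Rightarrow> real" where
  "sg M = (if psd M then 1 else -1)"

lemma W_eq: "M = sg M *\<^sub>R mabs M"
  by (simp add: sg_def mabs_def)

lemma sg_sq: "sg M * sg M = 1"
  by (simp add: sg_def)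

lemma lap_row:
  fixes W :: "'n::finite \<Rightarrow> 'n \<Rightarrow> real^'d^'d"
  shows "(\<Sum>j\<in>UNIV. laplacian W i j *v x j)
     = (\<Sum>j\<in>UNIV. mabs (W i j) *v (x i - sg (W i j) *\<^sub>R x j))"
proof -
  have "(\<Sum>j\<in>UNIV. laplacian W i j *v x j)
      = (\<Sum>j\<in>UNIV. (if i = j then degree W i *v x i else 0) - W i j *v x j)"
    by (rule sum.cong) (auto simp: laplacian_def matrix_vector_mult_diff_rdistrib)
  also have "\<dots> = degree W i *v x i - (\<Sum>j\<in>UNIV. W i j *v x j)"
    by (simp add: sum_subtractf)
  also have "degree W i *v x i = (\<Sum>j\<in>UNIV. mabs (W i j) *v x i)"
    by (simp add: degree_def sum_mat_vec)
  also have "(\<Sum>j\<in>UNIV. W i j *v x j) = (\<Sum>j\<in>UNIV. mabs (W i j) *v (sg (W i j) *\<^sub>R x j))"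
    by (rule sum.cong; simp) (metis W_eq matrix_scaleR_vector_ac)
  finally show ?thesis
    by (simp add: sum_subtractf[symmetric] matrix_vector_mult_diff_distrib)
qed

lemma quad_id:
  fixes W :: "'n::finite \<Rightarrow> 'n \<Rightarrow> real^'d^'d"
  assumes symm: "\<And>i j. W i j = W j i"
  shows "2 * (\<Sum>i\<in>UNIV. x i \<bullet> (\<Sum>j\<in>UNIV. laplacian W i j *v x j))
    = (\<Sum>i\<in>UNIV. \<Sum>j\<in>UNIV. (x i - sg (W i j) *\<^sub>R x j) \<bullet>
          (mabs (W i j) *v (x i - sg (W i j) *\<^sub>R x j)))"
proof -
  define y where "y i j = x i - sg (W i j) *\<^sub>R x j" for i j
  define M where "M i j = mabs (W i j)" for i j
  have Q: "(\<Sum>i\<in>UNIV. x i \<bullet> (\<Sum>j\<in>UNIV. laplacian W i j *v x j))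
      = (\<Sum>i\<in>UNIV. \<Sum>j\<in>UNIV. x i \<bullet> (M i j *v y i j))"
    by (simp add: lap_row inner_sum_right y_def M_def)
  have Mji: "M j i = M i j" for i j using symm M_def by simp
  have yji: "y j i = (- sg (W i j)) *\<^sub>R y i j" for i j
  proof -
    have e: "sg (W j i) = sg (W i j)" using symm[of j i] by simp
    have "(- sg (W i j)) *\<^sub>R y i j = x j - sg (W i j) *\<^sub>R x i"
      unfolding y_def scaleR_diff_right scaleR_scaleR
      using sg_sq[of "W i j"] by simp
    then show ?thesis unfolding y_def e by simp
  qed
  have "(\<Sum>i\<in>UNIV. \<Sum>j\<in>UNIV. x i \<bullet> (M i j *v y i j))
      = (\<Sum>i\<in>UNIV. \<Sum>j\<in>UNIV. x j \<bullet> (M j i *v y j i))"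
    by (rule sum.swap)
  also have "\<dots> = (\<Sum>i\<in>UNIV. \<Sum>j\<in>UNIV. ((- sg (W i j)) *\<^sub>R x j) \<bullet> (M i j *v y i j))"
  proof (intro sum.cong refl)
    fix i j
    show "x j \<bullet> (M j i *v y j i) = ((- sg (W i j)) *\<^sub>R x j) \<bullet> (M i j *v y i j)"
    proof -
      have a: "M j i = M i j" by (simp add: M_def symm[of j i])
      have b: "y j i = (- sg (W i j)) *\<^sub>R y i j" by (rule yji)
      show ?thesis unfolding a b matrix_vector_mult_scaleR inner_scaleR_right inner_scaleR_left by simp
    qed
  qed
  finally have Q2: "(\<Sum>i\<in>UNIV. \<Sum>j\<in>UNIV. x i \<bullet> (M i j *v y i j))
      = (\<Sum>i\<in>UNIV. \<Sum>j\<in>UNIV. ((- sg (W i j)) *\<^sub>R x j) \<bullet> (M i j *v y i j))" .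
  have "2 * (\<Sum>i\<in>UNIV. \<Sum>j\<in>UNIV. x i \<bullet> (M i j *v y i j))
     = (\<Sum>i\<in>UNIV. \<Sum>j\<in>UNIV. x i \<bullet> (M i j *v y i j))
      + (\<Sum>i\<in>UNIV. \<Sum>j\<in>UNIV. ((- sg (W i j)) *\<^sub>R x j) \<bullet> (M i j *v y i j))"
    using Q2 by simp
  also have "\<dots> = (\<Sum>i\<in>UNIV. \<Sum>j\<in>UNIV. x i \<bullet> (M i j *v y i j) + ((- sg (W i j)) *\<^sub>R x j) \<bullet> (M i j *v y i j))"
    by (simp only: sum.distrib)
  also have "\<dots> = (\<Sum>i\<in>UNIV. \<Sum>j\<in>UNIV. y i j \<bullet> (M i j *v y i j))"
  proof (intro sum.cong refl)
    fix i j
    have "y i j = x i + (- sg (W i j)) *\<^sub>R x j" unfolding y_def by simp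
    then show "x i \<bullet> (M i j *v y i j) + ((- sg (W i j)) *\<^sub>R x j) \<bullet> (M i j *v y i j)
        = y i j \<bullet> (M i j *v y i j)"
      by (simp only: inner_add_left)
  qed
  finally have F: "2 * (\<Sum>i\<in>UNIV. \<Sum>j\<in>UNIV. x i \<bullet> (M i j *v y i j))
     = (\<Sum>i\<in>UNIV. \<Sum>j\<in>UNIV. y i j \<bullet> (M i j *v y i j))" .
  show ?thesis unfolding Q using F unfolding y_def M_def .
qed

lemma transpose_neg': "transpose (- (M::real^'n^'m)) = - transpose M"
  by (simp add: transpose_def vec_eq_iff)

lemma neg_mat_vec: "(- (M::real^'n^'m)) *v y = - (M *v y)"
  by (simp add: matrix_vector_mult_def vec_eq_iff sum_negf)

definition Qf :: "('n::finite \<Rightarrow> 'n \<Rightarrow> real^'d^'d) \<Rightarrow> ('n \<Rightarrow> real^'d) \<Rightarrow> real" where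
  "Qf L x = (\<Sum>i\<in>UNIV. x i \<bullet> (\<Sum>j\<in>UNIV. L i j *v x j))"

lemma mabs_props:
  assumes "psd M \<or> nsd M"
  shows "transpose (mabs M) = mabs M" "\<And>y. 0 \<le> y \<bullet> (mabs M *v y)"
proof -
  show "transpose (mabs M) = mabs M"
    using assms by (auto simp: mabs_def psd_def nsd_def transpose_neg')
  fix y
  show "0 \<le> y \<bullet> (mabs M *v y)"
  proof (cases "psd M")
    case True then show ?thesis by (simp add: mabs_def psd_def)
  next
    case False
    then have "y \<bullet> (M *v y) \<le> 0" using assms by (auto simp: nsd_def)
    moreover have "(- M) *v y = - (M *v y)"
      by (rule neg_mat_vec)
    ultimately show ?thesis using False by (simp add: mabs_def)
  qed
qed

lemma lap_psd_null:
  fixes W :: "'n::finite \<Rightarrow> 'n \<Rightarrow> real^'d^'d"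
  assumes symm: "\<And>i j. W i j = W j i" and pn: "\<And>i j. psd (W i j) \<or> nsd (W i j)"
  shows "0 \<le> Qf (laplacian W) x" "Qf (laplacian W) x = 0 \<Longrightarrow> x \<in> block_null (laplacian W)"
proof -
  define y where "y i j = x i - sg (W i j) *\<^sub>R x j" for i j
  define M where "M i j = mabs (W i j)" for i j
  have E: "2 * Qf (laplacian W) x = (\<Sum>i\<in>UNIV. \<Sum>j\<in>UNIV. y i j \<bullet> (M i j *v y i j))"
    unfolding Qf_def y_def M_def by (rule quad_id[OF symm])
  have nn: "0 \<le> y i j \<bullet> (M i j *v y i j)" for i j
    unfolding M_def by (rule mabs_props(2)[OF pn])
  have "0 \<le> (\<Sum>i\<in>UNIV. \<Sum>j\<in>UNIV. y i j \<bullet> (M i j *v y i j))"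
    by (intro sum_nonneg nn)
  then show "0 \<le> Qf (laplacian W) x" using E by simp
  assume "Qf (laplacian W) x = 0"
  then have "(\<Sum>i\<in>UNIV. \<Sum>j\<in>UNIV. y i j \<bullet> (M i j *v y i j)) = 0" using E by simp
  then have z: "y i j \<bullet> (M i j *v y i j) = 0" for i j
    using nn by (simp add: sum_nonneg_eq_0_iff sum_nonneg)
  have Mz: "M i j *v y i j = 0" for i j
    by (rule psd_null[OF _ _ z]) (auto simp: M_def intro: mabs_props[OF pn])
  show "x \<in> block_null (laplacian W)"
    unfolding block_null_def using Mz by (simp add: lap_row y_def M_def)
qed

lemma piece_integral:
  fixes f :: "real \<Rightarrow> 'a::banach"
  assumes "a \<le> b" "\<And>s. a \<le> s \<Longrightarrow> s < b \<Longrightarrow> f s = c"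
  shows "(f has_integral (b - a) *\<^sub>R c) {a..b}"
proof -
  have "((\<lambda>x. c) has_integral (b - a) *\<^sub>R c) {a..b}"
    using has_integral_const_real[of c a b] assms(1) by (simp add: content_real)
  then show ?thesis
  proof (rule has_integral_spike_finite[rotated 2])
    show "finite {b}" by simp
    fix x assume "x \<in> {a..b} - {b}"
    then show "f x = c" using assms(2) by auto
  qed
qed

lemma pw_integral:
  fixes f :: "real \<Rightarrow> 'a::banach" and tk :: "nat \<Rightarrow> real"
  assumes mono: "\<And>m. tk m \<le> tk (Suc m)"
    and pw: "\<And>m s. tk m \<le> s \<Longrightarrow> s < tk (Suc m) \<Longrightarrow> f s = g m"
  shows "(f has_integral (\<Sum>m\<in>{k..<k+n}. (tk (Suc m) - tk m) *\<^sub>R g m)) {tk k..tk (k+n)}"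
proof (induction n)
  case 0
  then show ?case using has_integral_null_real[of "tk k" "tk k" f] by simp
next
  case (Suc n)
  have mono': "tk a \<le> tk b" if "a \<le> b" for a b
    using lift_Suc_mono_le[of tk, OF mono that] .
  have P: "(f has_integral (tk (Suc (k+n)) - tk (k+n)) *\<^sub>R g (k+n)) {tk (k+n)..tk (Suc (k+n))}"
    by (rule piece_integral[OF mono]) (rule pw)
  have "(f has_integral (\<Sum>m\<in>{k..<k+n}. (tk (Suc m) - tk m) *\<^sub>R g m)
        + (tk (Suc (k+n)) - tk (k+n)) *\<^sub>R g (k+n)) {tk k..tk (Suc (k+n))}"
    using mono'[of k "k+n", OF le_add1] mono[of "k+n"] Suc.IH P by (rule has_integral_combine)
  then show ?case by simp
qed

theorem lemma9:
  fixes A :: "real \<Rightarrow> 'n::finite \<Rightarrow> 'n \<Rightarrow> real^'d^'d"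
    and tk :: "nat \<Rightarrow> real" and \<alpha> :: real and k' k'' :: nat
  assumes n_gt1: "CARD('n) > 1"
    and sym: "\<And>t i j. 0 \<le> t \<Longrightarrow> transpose (A t i j) = A t i j"
    and psd_or_nsd: "\<And>t i j. 0 \<le> t \<Longrightarrow> psd (A t i j) \<or> nsd (A t i j)"
    and symm_net: "\<And>t i j. 0 \<le> t \<Longrightarrow> A t i j = A t j i"
    and no_loops: "\<And>t i. 0 \<le> t \<Longrightarrow> A t i i = 0"
    and sign_const: "\<And>i j. (\<forall>t\<ge>0. psd (A t i j)) \<or> (\<forall>t\<ge>0. nsd (A t i j))"
    and t0: "tk 0 = 0"
    and alpha_pos: "\<alpha> > 0"
    and dwell: "\<And>k. tk (Suc k) - tk k \<ge> \<alpha>"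
    and t_inf: "filterlim tk at_top sequentially"
    and piecewise: "\<And>k s. tk k \<le> s \<Longrightarrow> s < tk (Suc k) \<Longrightarrow> A s = A (tk k)"
    and kk: "k' < k''"
  shows "block_null (integral_laplacian A (tk k') (tk k''))
         = (\<Inter>i\<in>{1..k'' - k'}. block_null (laplacian (A (tk (k' + i - 1)))))"
proof -
  have mono: "tk m \<le> tk (Suc m)" for m using dwell[of m] alpha_pos by linarith
  have mono': "tk a \<le> tk b" if "a \<le> b" for a b
    using lift_Suc_mono_le[of tk, OF mono that] .
  have nonneg: "0 \<le> tk m" for m using mono'[of 0 m] t0 by simp
  define S where "S = {k'..<k''}"
  define c where "c m = tk (Suc m) - tk m" for m
  define Lm where "Lm m = laplacian (A (tk m))" for m
  have cpos: "c m > 0" for m using dwell[of m] alpha_pos unfolding c_def by linarith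
  define T where "T = tk k'' - tk k'"
  have Tpos: "T > 0"
    using mono'[of "Suc k'" k''] cpos[of k'] kk T_def c_def by simp
  have kn: "k'' = k' + (k'' - k')" using kk by simp
  have intg: "integral {tk k'..tk k''} (\<lambda>t. laplacian (A t) i j) = (\<Sum>m\<in>S. c m *\<^sub>R Lm m i j)" for i j
  proof -
    have "((\<lambda>t. laplacian (A t) i j) has_integral (\<Sum>m\<in>{k'..<k'+(k''-k')}. c m *\<^sub>R Lm m i j))
          {tk k'..tk (k'+(k''-k'))}"
      unfolding c_def Lm_def
      by (rule pw_integral[of tk, OF mono]) (metis piecewise)
    then have "((\<lambda>t. laplacian (A t) i j) has_integral (\<Sum>m\<in>{k'..<k''}. c m *\<^sub>R Lm m i j))
          {tk k'..tk k''}"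
      by (simp only: kn[symmetric])
    then show ?thesis unfolding S_def by (rule integral_unique)
  qed
  define Lt where "Lt = integral_laplacian A (tk k') (tk k'')"
  have Ltv: "(\<Sum>j\<in>UNIV. Lt i j *v x j) = (1 / T) *\<^sub>R (\<Sum>m\<in>S. c m *\<^sub>R (\<Sum>j\<in>UNIV. Lm m i j *v x j))"
    for i x
  proof -
    have e1: "Lt i j *v x j = (1 / T) *\<^sub>R (\<Sum>m\<in>S. c m *\<^sub>R (Lm m i j *v x j))" for j
    proof -
      have "Lt i j = (1 / T) *\<^sub>R (\<Sum>m\<in>S. c m *\<^sub>R Lm m i j)"
        unfolding Lt_def integral_laplacian_def intg T_def ..
      then show ?thesis
        by (simp only: sum_mat_vec[OF finite_atLeastLessThan, of _ _, folded S_def]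
            scaleR_matrix_vector_assoc[symmetric] S_def)
    qed
    have "(\<Sum>j\<in>UNIV. Lt i j *v x j) = (\<Sum>j\<in>UNIV. (1 / T) *\<^sub>R (\<Sum>m\<in>S. c m *\<^sub>R (Lm m i j *v x j)))"
      by (simp only: e1)
    also have "\<dots> = (1 / T) *\<^sub>R (\<Sum>j\<in>UNIV. \<Sum>m\<in>S. c m *\<^sub>R (Lm m i j *v x j))"
      by (simp only: scaleR_sum_right)
    also have "(\<Sum>j\<in>UNIV. \<Sum>m\<in>S. c m *\<^sub>R (Lm m i j *v x j)) = (\<Sum>m\<in>S. \<Sum>j\<in>UNIV. c m *\<^sub>R (Lm m i j *v x j))"
      by (rule sum.swap)
    also have "\<dots> = (\<Sum>m\<in>S. c m *\<^sub>R (\<Sum>j\<in>UNIV. Lm m i j *v x j))"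
      by (simp only: scaleR_sum_right)
    finally show ?thesis .
  qed
  have hyps1: "A (tk m) i j = A (tk m) j i" for m i j
    using symm_net nonneg by auto
  have hyps2: "psd (A (tk m) i j) \<or> nsd (A (tk m) i j)" for m i j
    using psd_or_nsd nonneg by auto
  have QLt: "Qf Lt x = (1 / T) * (\<Sum>m\<in>S. c m * Qf (Lm m) x)" for x
  proof -
    have "Qf Lt x = (\<Sum>i\<in>UNIV. (1 / T) * (\<Sum>m\<in>S. c m * (x i \<bullet> (\<Sum>j\<in>UNIV. Lm m i j *v x j))))"
      unfolding Qf_def Ltv by (simp only: inner_scaleR_right inner_sum_right)
    also have "\<dots> = (1 / T) * (\<Sum>i\<in>UNIV. \<Sum>m\<in>S. c m * (x i \<bullet> (\<Sum>j\<in>UNIV. Lm m i j *v x j)))"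
      by (simp only: sum_distrib_left)
    also have "(\<Sum>i\<in>UNIV. \<Sum>m\<in>S. c m * (x i \<bullet> (\<Sum>j\<in>UNIV. Lm m i j *v x j)))
        = (\<Sum>m\<in>S. \<Sum>i\<in>UNIV. c m * (x i \<bullet> (\<Sum>j\<in>UNIV. Lm m i j *v x j)))"
      by (rule sum.swap)
    also have "\<dots> = (\<Sum>m\<in>S. c m * Qf (Lm m) x)"
      unfolding Qf_def by (simp only: sum_distrib_left)
    finally show ?thesis .
  qed
  have idx: "(\<Inter>i\<in>{1..k'' - k'}. block_null (laplacian (A (tk (k' + i - 1))))) = (\<Inter>m\<in>S. block_null (Lm m))"
  proof
    show "(\<Inter>i\<in>{1..k'' - k'}. block_null (laplacian (A (tk (k' + i - 1))))) \<subseteq> (\<Inter>m\<in>S. block_null (Lm m))"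
    proof (rule INT_greatest)
      fix m assume m: "m \<in> S"
      then have a: "m - k' + 1 \<in> {1..k'' - k'}" and b: "k' + (m - k' + 1) - 1 = m"
        unfolding S_def by auto
      show "(\<Inter>i\<in>{1..k'' - k'}. block_null (laplacian (A (tk (k' + i - 1))))) \<subseteq> block_null (Lm m)"
        using INT_lower[OF a, of "\<lambda>i. block_null (laplacian (A (tk (k' + i - 1))))"] b
        unfolding Lm_def by simp
    qed
  next
    show "(\<Inter>m\<in>S. block_null (Lm m)) \<subseteq> (\<Inter>i\<in>{1..k'' - k'}. block_null (laplacian (A (tk (k' + i - 1)))))"
    proof (rule INT_greatest)
      fix i assume "i \<in> {1..k'' - k'}"
      then have a: "k' + i - 1 \<in> S" unfolding S_def by auto
      show "(\<Inter>m\<in>S. block_null (Lm m)) \<subseteq> block_null (laplacian (A (tk (k' + i - 1))))"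
        using INT_lower[OF a, of "\<lambda>m. block_null (Lm m)"] unfolding Lm_def by simp
    qed
  qed
  have Qnn: "0 \<le> Qf (Lm m) x" for m x
    unfolding Lm_def by (rule lap_psd_null(1)[OF hyps1[of m] hyps2[of m]])
  have Nul: "Qf (Lm m) x = 0 \<Longrightarrow> x \<in> block_null (Lm m)" for m x
    unfolding Lm_def by (rule lap_psd_null(2)[OF hyps1[of m] hyps2[of m]])
  show ?thesis
    unfolding idx Lt_def[symmetric]
  proof
    show "block_null Lt \<subseteq> (\<Inter>m\<in>S. block_null (Lm m))"
    proof
      fix x assume "x \<in> block_null Lt"
      then have "Qf Lt x = 0" by (simp add: block_null_def Qf_def)
      then have s0: "(\<Sum>m\<in>S. c m * Qf (Lm m) x) = 0" using QLt Tpos by simp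
      have nn: "\<forall>m\<in>S. 0 \<le> c m * Qf (Lm m) x"
        using Qnn cpos by (simp add: less_imp_le)
      have "\<forall>m\<in>S. c m * Qf (Lm m) x = 0"
        using s0 nn sum_nonneg_eq_0_iff[of S "\<lambda>m. c m * Qf (Lm m) x"] S_def by simp
      then have "\<forall>m\<in>S. Qf (Lm m) x = 0" using cpos by (metis less_irrefl mult_eq_0_iff)
      then show "x \<in> (\<Inter>m\<in>S. block_null (Lm m))"
        using Nul by auto
    qed
  next
    show "(\<Inter>m\<in>S. block_null (Lm m)) \<subseteq> block_null Lt"
      by (auto simp: block_null_def Ltv)
  qed
qed

end
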